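(* Let $l=1$ (write $X=x\in\mathbb R$, $\bar X=0$) in the standing assumptions of the context. There exist a neighborhood $\mathcal U$ of $(0,0)$ and $C>0$ such that at every point of $\mathcal U\cap\{t>0\}$ where $\Delta>0$, \[ \frac{|\partial_x\lambda_1|}{\lambda_1}\le C\Big(\frac1{\sqrt a}+\frac1{\sqrt\Delta}\Big). \] Moreover, if $\phi>0$ is a function on a subset $\omega\subset\mathcal U\cap\{t>0\}$ with $\phi^2a\le C_0\Delta$ on $\omega$ for some $C_0>0$, then there is $C'>0$ with $|\partial_x\lambda_1|/\lambda_1\le C'/(\phi\sqrt a)$ at points of $\omega$ where $\Delta>0$.
   Context: Let $W\subset\mathbb R$ be an open interval containing $0$, $c,T>0$, and let $a(t,x),b(t,x)$ be real-valued $C^\infty$ functions on $(-c,T)\times W$ with bounded derivatives of all orders. Assume $\Delta:=4a^3-27b^2\ge0$ on $[0,T)\times W$, $a(0,0)=0$, and $a>0$ on $(0,T)\times W$. Let $S=\begin{bmatrix}3&0&-a\\0&2a&3b\\-a&3b&a^2\end{bmatrix}$ with eigenvalues $0\le\lambda_1\le\lambda_2\le\lambda_3$ (smooth on $\mathcal U\cap\{t>0\}$ for $\mathcal U$ a small neighborhood of $(0,0)$). *)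

theory Defs
  imports "HOL-Analysis.Analysis"
begin

text \<open>Iterated partial derivatives of a function of (t,x). A list entry True means
  differentiation in t, False means differentiation in x; the head of the list is the
  last derivative applied.\<close>
fun ipd :: "bool list \<Rightarrow> (real \<Rightarrow> real \<Rightarrow> real) \<Rightarrow> real \<Rightarrow> real \<Rightarrow> real" where
  "ipd [] f = f"
| "ipd (True # ds) f = (\<lambda>t x. deriv (\<lambda>s. ipd ds f s x) t)"
| "ipd (False # ds) f = (\<lambda>t x. deriv (\<lambda>y. ipd ds f t y) x)"

definition smooth_bdd :: "(real \<times> real) set \<Rightarrow> (real \<Rightarrow> real \<Rightarrow> real) \<Rightarrow> bool" where
  "smooth_bdd Om f \<longleftrightarrow>
     (\<forall>ds. continuous_on Om (\<lambda>p. ipd ds f (fst p) (snd p))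
        \<and> (\<forall>t x. (t, x) \<in> Om \<longrightarrow>
              (\<lambda>s. ipd ds f s x) differentiable (at t)
            \<and> (\<lambda>y. ipd ds f t y) differentiable (at x))
        \<and> (\<exists>M. \<forall>t x. (t, x) \<in> Om \<longrightarrow> \<bar>ipd ds f t x\<bar> \<le> M))"

definition Smat :: "real \<Rightarrow> real \<Rightarrow> real^3^3" where
  "Smat a b = vector [vector [3, 0, - a], vector [0, 2 * a, 3 * b], vector [- a, 3 * b, a ^ 2]]"

definition is_eigenvalue :: "real^'n^'n \<Rightarrow> real \<Rightarrow> bool" where
  "is_eigenvalue M l \<longleftrightarrow> (\<exists>v. v \<noteq> 0 \<and> M *v v = l *s v)"

definition lam1 :: "(real \<Rightarrow> real \<Rightarrow> real) \<Rightarrow> (real \<Rightarrow> real \<Rightarrow> real) \<Rightarrow> real \<Rightarrow> real \<Rightarrow> real" where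
  "lam1 a b t x = Min {l. is_eigenvalue (Smat (a t x) (b t x)) l}"

definition Disc :: "(real \<Rightarrow> real \<Rightarrow> real) \<Rightarrow> (real \<Rightarrow> real \<Rightarrow> real) \<Rightarrow> real \<Rightarrow> real \<Rightarrow> real" where
  "Disc a b t x = 4 * (a t x) ^ 3 - 27 * (b t x) ^ 2"

end

theory Submission
  imports Defs
begin


definition Pc :: "real \<Rightarrow> real \<Rightarrow> real \<Rightarrow> real" where
  "Pc a b l = l^3 - (3 + 2*a + a^2) * l^2 + (6*a + 2*a^2 + 2*a^3 - 9*b^2) * l - (4*a^3 - 27*b^2)"

lemma eig_iff: "is_eigenvalue (Smat a b) l \<longleftrightarrow> Pc a b l = 0"
proof -
  have "is_eigenvalue (Smat a b) l \<longleftrightarrow> (\<exists>v. v \<noteq> 0 \<and> (Smat a b - l *\<^sub>R mat 1) *v v = 0)"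
    unfolding is_eigenvalue_def
    by (simp add: matrix_vector_mult_diff_rdistrib scalar_mult_eq_scaleR flip: scaleR_matrix_vector_assoc)
  also have "\<dots> \<longleftrightarrow> \<not> invertible (Smat a b - l *\<^sub>R mat 1)"
    unfolding invertible_left_inverse matrix_left_invertible_ker by auto
  also have "\<dots> \<longleftrightarrow> det (Smat a b - l *\<^sub>R mat 1) = 0"
    by (simp add: invertible_det_nz)
  also have "det (Smat a b - l *\<^sub>R mat 1) = - Pc a b l"
    unfolding det_3 Smat_def Pc_def by (simp add: mat_def) algebra
  finally show ?thesis by simp
qed


lemma b2_le: fixes a b :: real assumes "0 < a" "0 < 4*a^3 - 27*b^2" shows "b^2 \<le> a^3" "9*b^2 \<le> 2*a^3"
proof -
  have "0 < a^3" using assms by simp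
  then show "b^2 \<le> a^3" "9*b^2 \<le> 2*a^3" using assms(2) by linarith+
qed

lemma a2_le: fixes a :: real assumes "0 < a" "a \<le> 1/8" shows "a^2 \<le> a/8"
proof -
  have "a*a \<le> a*(1/8)" using assms by (intro mult_left_mono) auto
  thus ?thesis by (simp add: power2_eq_square)
qed

lemma Pc_neg: fixes a b l :: real assumes "0 < a" "a \<le> 1/8" "0 < 4*a^3 - 27*b^2" "l \<le> 0"
  shows "Pc a b l < 0"
proof -
  have bb: "9*b^2 \<le> 2*a^3" using b2_le assms by blast
  have "0 \<le> a^2" by simp
  hence m: "0 \<le> 6*a + 2*a^2 + 2*a^3 - 9*b^2" using bb assms by linarith
  have t: "0 < 3 + 2*a + a^2" using assms by (simp add: add_pos_nonneg)
  have "l^3 \<le> 0" using assms(4) by (simp add: power3_eq_cube mult_nonneg_nonpos)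
  moreover have "(3 + 2*a + a^2) * l^2 \<ge> 0" using t by simp
  moreover have "(6*a + 2*a^2 + 2*a^3 - 9*b^2) * l \<le> 0" using m assms(4) by (simp add: mult_nonneg_nonpos)
  ultimately show ?thesis unfolding Pc_def using assms(3) by linarith
qed

lemma Pc_pos: fixes a b :: real assumes "0 < a" "a \<le> 1/8" "0 < 4*a^3 - 27*b^2"
  shows "Pc a b ((4*a^3 - 27*b^2)/(3*a)) > 0" and "(4*a^3 - 27*b^2)/(3*a) \<le> 4*a^2/3"
proof -
  define D where "D = 4*a^3 - 27*b^2"
  define l where "l = D/(3*a)"
  have bb: "9*b^2 \<le> 2*a^3" using b2_le assms by blast
  have lpos: "0 < l" using assms unfolding l_def D_def by simp
  have "D \<le> 4*a^3" unfolding D_def by simp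
  hence l4: "l \<le> 4*a^2/3" unfolding l_def using assms(1) by (simp add: divide_simps power2_eq_square power3_eq_cube)
  show "(4*a^3 - 27*b^2)/(3*a) \<le> 4*a^2/3" using l4 unfolding l_def D_def .
  have "0 \<le> a^2" by simp
  hence m: "6*a \<le> 6*a + 2*a^2 + 2*a^3 - 9*b^2" using bb by linarith
  have t: "3 + 2*a + a^2 \<le> 4" using assms a2_le[OF assms(1,2)] by linarith
  have "(3 + 2*a + a^2) * l \<le> 4 * (4*a^2/3)" using t l4 lpos assms(1)
    by (intro mult_mono) (auto simp: add_nonneg_nonneg)
  moreover have "4 * (4*a^2/3) \<le> 3 * a - 3*a/2" using a2_le[OF assms(1,2)] assms(1) by linarith
  moreover have "0 \<le> l^2" by simp
  ultimately have g: "3*a + 3*a/2 \<le> l^2 - (3 + 2*a + a^2) * l + (6*a + 2*a^2 + 2*a^3 - 9*b^2)"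
    using m by linarith
  have "Pc a b l = l * (l^2 - (3 + 2*a + a^2) * l + (6*a + 2*a^2 + 2*a^3 - 9*b^2)) - D"
    unfolding Pc_def D_def by (simp add: algebra_simps power2_eq_square power3_eq_cube)
  moreover have "l * (3*a + 3*a/2) \<le> l * (l^2 - (3 + 2*a + a^2) * l + (6*a + 2*a^2 + 2*a^3 - 9*b^2))"
    using g lpos by simp
  moreover have "l * (3*a) = D" unfolding l_def using assms(1) by simp
  moreover have "l * (3*a/2) > 0" using lpos assms(1) by simp
  ultimately show "Pc a b ((4*a^3 - 27*b^2)/(3*a)) > 0" unfolding l_def[symmetric] D_def[symmetric]
    by (simp add: algebra_simps)
qed

lemma Pc_finite: "finite {l. Pc a b l = 0}"
proof -
  have "{l. Pc a b l = 0} = {l. poly [:-(4*a^3 - 27*b^2), 6*a + 2*a^2 + 2*a^3 - 9*b^2, -(3 + 2*a + a^2), 1:] l = 0}"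
    unfolding Pc_def by (auto simp: algebra_simps power2_eq_square power3_eq_cube)
  also have "finite \<dots>" by (rule poly_roots_finite) simp
  finally show ?thesis .
qed

lemma root_props:
  fixes a b :: real
  assumes a0: "0 < a" and a1: "a \<le> 1/8" and D0: "0 < 4*a^3 - 27*b^2"
  defines "r \<equiv> Min {l. Pc a b l = 0}"
  shows "Pc a b r = 0" "0 < r" "r \<le> (4*a^3 - 27*b^2)/(3*a)" "r \<le> 4*a^2/3"
    "\<forall>l. Pc a b l = 0 \<longrightarrow> r \<le> l"
    "4*a \<le> 3*r^2 - 2*(3+2*a+a^2)*r + (6*a+2*a^2+2*a^3-9*b^2)"
    "(4*a^3 - 27*b^2)/2 \<le> r*(3*r^2 - 2*(3+2*a+a^2)*r + (6*a+2*a^2+2*a^3-9*b^2))"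
proof -
  define D where "D = 4*a^3 - 27*b^2"
  define l0 where "l0 = D/(3*a)"
  have p0: "Pc a b l0 > 0" "l0 \<le> 4*a^2/3" using Pc_pos[OF a0 a1 D0] unfolding l0_def D_def by auto
  have "Pc a b 0 < 0" using Pc_neg[OF a0 a1 D0] by simp
  moreover have "\<forall>x. 0 \<le> x \<and> x \<le> l0 \<longrightarrow> isCont (Pc a b) x" unfolding Pc_def by (auto intro!: continuous_intros)
  moreover have "0 \<le> l0" unfolding l0_def D_def using a0 D0 by simp
  ultimately obtain x where x: "0 \<le> x" "x \<le> l0" "Pc a b x = 0"
    using IVT[of "Pc a b" 0 0 l0] p0 by force
  have fin: "finite {l. Pc a b l = 0}" by (rule Pc_finite)
  have ne: "{l. Pc a b l = 0} \<noteq> {}" using x by auto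
  show r0: "Pc a b r = 0" unfolding r_def using Min_in[OF fin ne] by simp
  show rle: "\<forall>l. Pc a b l = 0 \<longrightarrow> r \<le> l" unfolding r_def using fin by auto
  show rpos: "0 < r" using Pc_neg[OF a0 a1 D0, of r] r0 by force
  have "r \<le> x" using rle x by auto
  thus rl0: "r \<le> (4*a^3 - 27*b^2)/(3*a)" using x unfolding l0_def D_def by simp
  thus rb: "r \<le> 4*a^2/3" using p0(2) unfolding l0_def D_def by linarith
  have bb: "9*b^2 \<le> 2*a^3" using b2_le a0 D0 by blast
  have "0 \<le> a^2" by simp
  hence m: "6*a \<le> 6*a + 2*a^2 + 2*a^3 - 9*b^2" using bb by linarith
  have t: "3 + 2*a + a^2 \<le> 4" using a0 a1 a2_le[OF a0 a1] by linarith
  have tp: "0 < 3 + 2*a + a^2" using a0 by (simp add: add_pos_nonneg)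
  have "(3 + 2*a + a^2) * r \<le> 4 * (4*a^2/3)" using t rb rpos a0
    by (intro mult_mono) (auto simp: add_nonneg_nonneg)
  moreover have "4 * (4*a^2/3) \<le> a" using a2_le[OF a0 a1] a0 by linarith
  moreover have "0 \<le> r^2" by simp
  ultimately show P': "4*a \<le> 3*r^2 - 2*(3+2*a+a^2)*r + (6*a+2*a^2+2*a^3-9*b^2)"
    using m by linarith
  have eq: "r*(3*r^2 - 2*(3+2*a+a^2)*r + (6*a+2*a^2+2*a^3-9*b^2)) = 2*r^3 - (3+2*a+a^2)*r^2 + D"
    using r0 unfolding Pc_def D_def by (simp add: algebra_simps power2_eq_square power3_eq_cube)
  have "r*r \<le> r * l0" using rl0 rpos unfolding l0_def D_def by (intro mult_left_mono) auto
  hence "r^2 \<le> r * l0" by (simp add: power2_eq_square)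
  also have "\<dots> \<le> (4*a^2/3) * l0" using rb \<open>0 \<le> l0\<close> by (intro mult_right_mono) auto
  also have "\<dots> = 4*a*D/9" unfolding l0_def using a0 by (simp add: power2_eq_square)
  finally have r2: "r^2 \<le> 4*a*D/9" .
  have "(3+2*a+a^2)*r^2 \<le> 4 * (4*a*D/9)" using t r2 tp by (intro mult_mono) auto
  moreover have "4 * (4*a*D/9) \<le> D/2" using a1 D0 unfolding D_def[symmetric]
    by (simp add: mult_right_mono)
  moreover have "0 \<le> r^3" using rpos by simp
  ultimately show "(4*a^3 - 27*b^2)/2 \<le> r*(3*r^2 - 2*(3+2*a+a^2)*r + (6*a+2*a^2+2*a^3-9*b^2))"
    unfolding eq D_def[symmetric] by linarith
qed



lemma taylor2_upper:
  fixes f f' f'' :: "real \<Rightarrow> real"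
  assumes d1: "\<forall>y. x - h \<le> y \<and> y \<le> x + h \<longrightarrow> (f has_real_derivative f' y) (at y)"
    and d2: "\<forall>y. x - h \<le> y \<and> y \<le> x + h \<longrightarrow> (f' has_real_derivative f'' y) (at y)"
    and bd: "\<forall>y. x - h \<le> y \<and> y \<le> x + h \<longrightarrow> f'' y \<le> M"
    and s: "\<bar>s\<bar> \<le> h"
  shows "f (x + s) \<le> f x + s * f' x + M * s^2 / 2"
proof (cases "s = 0")
  case True thus ?thesis by simp
next
  case False
  define diff where "diff = (\<lambda>m::nat. if m = 0 then f else if m = 1 then f' else f'')"
  have "\<forall>m t. m < 2 \<and> x - h \<le> t \<and> t \<le> x + h \<longrightarrow> DERIV (diff m) t :> diff (Suc m) t"
    using d1 d2 unfolding diff_def by (auto simp: less_2_cases_iff)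
  then obtain t where t: "(if x + s < x then x + s < t \<and> t < x else x < t \<and> t < x + s)"
    "f (x + s) = (\<Sum>m<2. (diff m x / fact m) * (x + s - x)^m) + (diff 2 t / fact 2) * (x + s - x)^2"
    using Taylor[of 2 diff f "x - h" "x + h" x "x + s"] s False unfolding diff_def
    by (auto simp: abs_le_iff)
  have "x - h \<le> t \<and> t \<le> x + h" using t(1) s by (auto simp: abs_le_iff split: if_splits)
  hence "f'' t \<le> M" using bd by auto
  hence "f'' t * s^2 \<le> M * s^2" by (simp add: mult_right_mono)
  moreover have "f (x + s) = f x + f' x * s + f'' t / 2 * s^2"
    using t(2) by (simp add: diff_def numeral_2_eq_2)
  ultimately show ?thesis by (simp add: algebra_simps)
qed

lemma glaeser:
  fixes f f' f'' :: "real \<Rightarrow> real"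
  assumes h: "0 < h" and M: "0 < M"
    and nn: "\<forall>y. x - h \<le> y \<and> y \<le> x + h \<longrightarrow> 0 \<le> f y"
    and d1: "\<forall>y. x - h \<le> y \<and> y \<le> x + h \<longrightarrow> (f has_real_derivative f' y) (at y)"
    and d2: "\<forall>y. x - h \<le> y \<and> y \<le> x + h \<longrightarrow> (f' has_real_derivative f'' y) (at y)"
    and bd: "\<forall>y. x - h \<le> y \<and> y \<le> x + h \<longrightarrow> \<bar>f'' y\<bar> \<le> M"
    and F: "f x \<le> F"
  shows "\<bar>f' x\<bar> \<le> (sqrt (2*M) + 2 * sqrt F/h) * sqrt (f x)"
proof -
  have bd': "\<forall>y. x - h \<le> y \<and> y \<le> x + h \<longrightarrow> f'' y \<le> M" using bd by auto
  have key: "0 \<le> f x + s * f' x + M * s^2 / 2" if "\<bar>s\<bar> \<le> h" for s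
  proof -
    have "0 \<le> f (x + s)" using nn that by (auto simp: abs_le_iff)
    thus ?thesis using taylor2_upper[OF d1 d2 bd' that] by linarith
  qed
  define v where "v = f' x"
  define p where "p = f x"
  have p0: "0 \<le> p" unfolding p_def using nn h by auto
  have sp: "0 \<le> sqrt p" using p0 by simp
  show ?thesis
  proof (cases "\<bar>v\<bar> \<le> M * h")
    case True
    have "\<bar>- v / M\<bar> \<le> h" using True M by (simp add: divide_simps abs_minus_commute mult.commute)
    from key[OF this] have "0 \<le> p + (- v / M) * v + M * (- v / M)^2 / 2" unfolding v_def p_def .
    also have "\<dots> = p - v^2 / (2*M)" using M by (simp add: field_simps power2_eq_square)
    finally have "v^2 \<le> 2*M*p" using M by (simp add: field_simps)
    hence "sqrt (v^2) \<le> sqrt (2*M*p)" by (rule real_sqrt_le_mono)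
    hence "\<bar>v\<bar> \<le> sqrt (2*M) * sqrt p" by (simp add: real_sqrt_mult)
    also have "\<dots> \<le> (sqrt (2*M) + 2 * sqrt F/h) * sqrt p"
      using sp h F p0 by (intro mult_right_mono) (auto simp: p_def)
    finally show ?thesis unfolding v_def p_def .
  next
    case False
    define s where "s = (if v \<ge> 0 then - h else h)"
    have sa: "\<bar>s\<bar> \<le> h" using h unfolding s_def by auto
    have sv: "s * v = - h * \<bar>v\<bar>" unfolding s_def by auto
    have s2: "s^2 = h^2" unfolding s_def by auto
    from key[OF sa] have "0 \<le> p - h * \<bar>v\<bar> + M * h^2 / 2" unfolding v_def[symmetric] p_def[symmetric]
      by (simp add: sv s2 mult.commute)
    moreover have "M * h^2 / 2 \<le> h * \<bar>v\<bar> / 2" using False h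
      by (simp add: power2_eq_square)
    ultimately have "h * \<bar>v\<bar> \<le> 2 * p" by linarith
    hence v1: "\<bar>v\<bar> \<le> 2 * p / h" using h by (simp add: field_simps)
    have "p = sqrt p * sqrt p" using p0 by simp
    also have "\<dots> \<le> sqrt F * sqrt p" using F sp unfolding p_def by (intro mult_right_mono) auto
    finally have "2 * p / h \<le> 2 * sqrt F * sqrt p / h" using h by (simp add: divide_right_mono)
    also have "\<dots> \<le> (sqrt (2*M) + 2 * sqrt F/h) * sqrt p" using sp M
      by (simp add: algebra_simps)
    finally show ?thesis using v1 unfolding v_def p_def by linarith
  qed
qed


lemma div3: "(X*p - Y*q + Z)/(w::real) = X/w*p - Y/w*q + Z/w"
  by (simp add: diff_divide_distrib add_divide_distrib)

lemma root_deriv: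
  fixes tau m D r :: "real \<Rightarrow> real" and x0 L c tau' m' D' :: real
  assumes ev: "eventually (\<lambda>y. r y ^3 - tau y * r y^2 + m y * r y - D y = 0 \<and> 0 \<le> r y \<and> r y \<le> L) (nhds x0)"
    and c: "0 < c" "c \<le> m x0 - 2 * tau x0 * L" "0 \<le> tau x0"
    and dt: "(tau has_real_derivative tau') (at x0)"
    and dm: "(m has_real_derivative m') (at x0)"
    and dD: "(D has_real_derivative D') (at x0)"
  shows "(r has_real_derivative (tau' * r x0^2 - m' * r x0 + D') / (3 * r x0^2 - 2 * tau x0 * r x0 + m x0)) (at x0)"
proof -
  define r0 where "r0 = r x0"
  define DD where "DD = (\<lambda>u v. u^2 + u * v + v^2 - tau x0 * (u + v) + m x0)"
  define E where "E = (\<lambda>y. (tau y - tau x0) * r y^2 - (m y - m x0) * r y + (D y - D x0))"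
  have ev0: "r x0 ^3 - tau x0 * r x0^2 + m x0 * r x0 - D x0 = 0 \<and> 0 \<le> r x0 \<and> r x0 \<le> L"
    using ev unfolding eventually_nhds by blast
  have DDc: "c \<le> DD u v" if "0 \<le> u" "u \<le> L" "0 \<le> v" "v \<le> L" for u v
  proof -
    have "tau x0 * (u + v) \<le> tau x0 * (2 * L)" using that c(3) by (intro mult_left_mono) auto
    moreover have "0 \<le> u^2 + u * v + v^2" using that by simp
    ultimately show ?thesis unfolding DD_def using c(2) by linarith
  qed
  have evE: "eventually (\<lambda>y. (r y - r0) * DD (r y) r0 = E y \<and> 0 \<le> r y \<and> r y \<le> L) (nhds x0)"
    using ev
  proof eventually_elim
    case (elim y)
    thus ?case using ev0 unfolding E_def DD_def r0_def
      by (auto simp: algebra_simps power2_eq_square power3_eq_cube)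
  qed
  have evE': "eventually (\<lambda>y. r y - r0 = E y / DD (r y) r0 \<and> 0 \<le> r y \<and> r y \<le> L) (nhds x0)"
    using evE
  proof eventually_elim
    case (elim y)
    have "c \<le> DD (r y) r0" using DDc elim ev0 unfolding r0_def by auto
    thus ?case using elim c(1) by (auto simp: field_simps)
  qed
  have ct: "(tau \<longlongrightarrow> tau x0) (at x0)" using DERIV_isCont[OF dt] by (simp add: isCont_def)
  have cm: "(m \<longlongrightarrow> m x0) (at x0)" using DERIV_isCont[OF dm] by (simp add: isCont_def)
  have cD: "(D \<longlongrightarrow> D x0) (at x0)" using DERIV_isCont[OF dD] by (simp add: isCont_def)
  define g where "g = (\<lambda>y. (\<bar>tau y - tau x0\<bar> * L^2 + \<bar>m y - m x0\<bar> * L + \<bar>D y - D x0\<bar>) / c)"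
  have "(g \<longlongrightarrow> (\<bar>tau x0 - tau x0\<bar> * L^2 + \<bar>m x0 - m x0\<bar> * L + \<bar>D x0 - D x0\<bar>) / c) (at x0)"
    unfolding g_def by (intro tendsto_intros ct cm cD) (use c in auto)
  hence g0: "(g \<longlongrightarrow> 0) (at x0)" by simp
  have evat: "eventually (\<lambda>y. r y - r0 = E y / DD (r y) r0 \<and> 0 \<le> r y \<and> r y \<le> L) (at x0)"
    using evE' by (simp add: eventually_at_filter eventually_mono)
  have "eventually (\<lambda>y. norm (r y - r0) \<le> g y) (at x0)"
    using evat
  proof eventually_elim
    case (elim y)
    have cd: "c \<le> DD (r y) r0" using DDc elim ev0 unfolding r0_def by auto
    have "\<bar>E y\<bar> \<le> \<bar>tau y - tau x0\<bar> * r y^2 + \<bar>m y - m x0\<bar> * r y + \<bar>D y - D x0\<bar>"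
      unfolding E_def using elim by (auto simp: abs_mult intro!: order_trans[OF abs_triangle_ineq] order_trans[OF abs_triangle_ineq4] add_mono)
    also have "\<dots> \<le> \<bar>tau y - tau x0\<bar> * L^2 + \<bar>m y - m x0\<bar> * L + \<bar>D y - D x0\<bar>"
      using elim by (intro add_mono mult_left_mono power_mono) auto
    finally have e1: "\<bar>E y\<bar> \<le> g y * c" unfolding g_def using c(1) by simp
    have "\<bar>r y - r0\<bar> = \<bar>E y\<bar> / DD (r y) r0" using elim cd c(1) by (simp add: abs_div)
    also have "\<dots> \<le> \<bar>E y\<bar> / c" using cd c(1) by (intro divide_left_mono) auto
    also have "\<dots> \<le> g y" using e1 c(1) by (simp add: divide_simps)
    finally show ?case by simp
  qed
  from Lim_null_comparison[OF this g0] have cr: "(r \<longlongrightarrow> r0) (at x0)"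
    by (simp add: LIM_zero_iff)
  have qt: "((\<lambda>y. (tau y - tau x0) / (y - x0)) \<longlongrightarrow> tau') (at x0)" using dt by (simp add: has_field_derivative_iff)
  have qm: "((\<lambda>y. (m y - m x0) / (y - x0)) \<longlongrightarrow> m') (at x0)" using dm by (simp add: has_field_derivative_iff)
  have qD: "((\<lambda>y. (D y - D x0) / (y - x0)) \<longlongrightarrow> D') (at x0)" using dD by (simp add: has_field_derivative_iff)
  have DD0: "DD r0 r0 = 3 * r x0^2 - 2 * tau x0 * r x0 + m x0" unfolding DD_def r0_def
    by (simp add: algebra_simps power2_eq_square)
  have DDpos: "c \<le> DD r0 r0" using DDc ev0 unfolding r0_def by auto
  have "((\<lambda>y. ((tau y - tau x0) / (y - x0) * r y^2 - (m y - m x0) / (y - x0) * r y + (D y - D x0) / (y - x0)) / DD (r y) r0)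
     \<longlongrightarrow> (tau' * r0^2 - m' * r0 + D') / DD r0 r0) (at x0)"
    unfolding DD_def by (intro tendsto_intros qt qm qD cr) (use DDpos c(1) in \<open>auto simp: DD_def\<close>)
  moreover have "eventually (\<lambda>y. ((tau y - tau x0) / (y - x0) * r y^2 - (m y - m x0) / (y - x0) * r y + (D y - D x0) / (y - x0)) / DD (r y) r0
      = (r y - r x0) / (y - x0)) (at x0)"
  proof -
    have "eventually (\<lambda>y. y \<noteq> x0) (at x0)" by (simp add: eventually_at_filter)
    with evat show ?thesis
    proof eventually_elim
      case (elim y)
      have "(r y - r x0) / (y - x0) = E y / (y - x0) / DD (r y) r0" using elim unfolding r0_def by simp
      also have "E y / (y - x0) = (tau y - tau x0) / (y - x0) * r y^2 - (m y - m x0) / (y - x0) * r y + (D y - D x0) / (y - x0)"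
        unfolding E_def by (rule div3)
      finally show ?case by simp
    qed
  qed
  ultimately have "((\<lambda>y. (r y - r x0) / (y - x0)) \<longlongrightarrow> (tau' * r0^2 - m' * r0 + D') / DD r0 r0) (at x0)"
    by (rule Lim_transform_eventually)
  thus ?thesis unfolding has_field_derivative_iff DD0[symmetric] r0_def by simp
qed


lemma final_bound:
  fixes a b a1 b1 r P D' Ka Kd A1 B1 :: real
  assumes a0: "0 < a" and a8: "a \<le> 1/8" and Dp: "0 < 4*a^3 - 27*b^2"
    and r0: "0 < r" and rb: "r \<le> 4*a^2/3" and P4: "4*a \<le> P" and rP: "(4*a^3 - 27*b^2)/2 \<le> r * P"
    and ha1: "\<bar>a1\<bar> \<le> Ka * sqrt a" and hA1: "\<bar>a1\<bar> \<le> A1" and hb1: "\<bar>b1\<bar> \<le> B1"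
    and hD: "\<bar>D'\<bar> \<le> Kd * sqrt (4*a^3 - 27*b^2)"
  shows "\<bar>((2 + 2*a)*a1 * r^2 - ((6 + 4*a + 6*a^2)*a1 - 18*b*b1) * r + D') / P\<bar> / r
     \<le> (A1 + 2*Ka + 5*B1 + 2*Kd) * (1 / sqrt a + 1 / sqrt (4*a^3 - 27*b^2))"
proof -
  define Dl where "Dl = 4*a^3 - 27*b^2"
  define s where "s = sqrt a"
  have s0: "0 < s" using a0 unfolding s_def by simp
  have ss: "s * s = a" using a0 unfolding s_def by simp
  have s1: "s \<le> 1" using a8 unfolding s_def by simp
  have Pp: "0 < P" using P4 a0 by linarith
  have a2: "a^2 \<le> a/8" using a0 a8 by (simp add: power2_eq_square)
  have "0 \<le> Ka * s" using order_trans[OF abs_ge_zero ha1] unfolding s_def .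
  hence Ka0: "0 \<le> Ka" using s0 by (simp add: zero_le_mult_iff)
  have B10: "0 \<le> B1" using hb1 by linarith
  have A10: "0 \<le> A1" using hA1 by linarith
  have "0 \<le> Kd * sqrt (4*a^3 - 27*b^2)" using order_trans[OF abs_ge_zero hD] .
  hence Kd0: "0 \<le> Kd" using Dp by (simp add: zero_le_mult_iff)
  have "0 < a^3" using a0 by simp
  hence bb: "b^2 \<le> a^3" using Dp by linarith
  have babs: "\<bar>b\<bar> \<le> a * s"
  proof -
    have "\<bar>b\<bar> = sqrt (b^2)" by simp
    also have "\<dots> \<le> sqrt (a^3)" using bb by (rule real_sqrt_le_mono)
    also have "sqrt (a^3) = a * s" unfolding s_def using a0
      by (simp add: power3_eq_cube real_sqrt_mult)
    finally show ?thesis .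
  qed
  have t1: "\<bar>(2 + 2*a)*a1\<bar> * r / P \<le> A1 / s"
  proof -
    have "\<bar>2 + 2*a\<bar> * \<bar>a1\<bar> \<le> 3 * A1" using a0 a8 hA1 A10 by (intro mult_mono) auto
    hence "\<bar>(2 + 2*a)*a1\<bar> \<le> 3 * A1" by (simp add: abs_mult)
    moreover have "r / P \<le> a / 3"
    proof -
      have "r / P \<le> (4*a^2/3) / (4*a)" using rb P4 r0 a0 by (intro frac_le) auto
      also have "\<dots> = a / 3" using a0 by (simp add: power2_eq_square)
      finally show ?thesis .
    qed
    ultimately have "\<bar>(2 + 2*a)*a1\<bar> * (r / P) \<le> 3 * A1 * (a/3)"
      using r0 Pp by (intro mult_mono) auto
    also have "\<dots> \<le> A1" using A10 a8 a0 by (simp add: mult_left_le)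
    also have "\<dots> \<le> A1 / s" using A10 s0 s1 by (simp add: le_divide_eq mult_left_le)
    finally show ?thesis by simp
  qed
  have t2: "\<bar>(6 + 4*a + 6*a^2)*a1 - 18*b*b1\<bar> / P \<le> (2*Ka + 5*B1) / s"
  proof -
    have c7: "\<bar>6 + 4*a + 6*a^2\<bar> \<le> 7" using a0 a8 a2 by simp
    have "\<bar>(6 + 4*a + 6*a^2)*a1 - 18*b*b1\<bar> \<le> \<bar>6 + 4*a + 6*a^2\<bar> * \<bar>a1\<bar> + 18 * (\<bar>b\<bar> * \<bar>b1\<bar>)"
      using abs_triangle_ineq4[of "(6 + 4*a + 6*a^2)*a1" "18*b*b1"] by (simp add: abs_mult)
    also have "\<dots> \<le> 7 * (Ka * s) + 18 * ((a* s) * B1)"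
    proof (rule add_mono)
      show "\<bar>6 + 4*a + 6*a^2\<bar> * \<bar>a1\<bar> \<le> 7 * (Ka * s)"
        using c7 ha1 unfolding s_def by (intro mult_mono) auto
      have "\<bar>b\<bar> * \<bar>b1\<bar> \<le> (a * s) * B1" using babs hb1 a0 s0 by (intro mult_mono) auto
      thus "18 * (\<bar>b\<bar> * \<bar>b1\<bar>) \<le> 18 * ((a * s) * B1)" by simp
    qed
    finally have num: "\<bar>(6 + 4*a + 6*a^2)*a1 - 18*b*b1\<bar> \<le> s * (7*Ka + 18*a*B1)" by (simp add: algebra_simps)
    have "\<bar>(6 + 4*a + 6*a^2)*a1 - 18*b*b1\<bar> / P \<le> s * (7*Ka + 18*a*B1) / (4*a)"
      using num P4 a0 by (intro frac_le) (auto intro!: mult_nonneg_nonneg add_nonneg_nonneg simp: s0 Ka0 B10 less_imp_le)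
    also have "\<dots> = (7*Ka + 18*a*B1) / (4* s)" using s0 ss[symmetric] by (simp add: field_simps)
    also have "\<dots> \<le> (2*Ka + 5*B1) / s"
    proof -
      have "a*B1 \<le> (1/8)*B1" using B10 a8 by (intro mult_right_mono) auto
      hence "8*(a*B1) \<le> B1" by simp
      hence "7*Ka + 18*(a*B1) \<le> 8*Ka + 20*B1" using Ka0 B10 by linarith
      hence "7*Ka + 18*(a*B1) \<le> 4 * (2*Ka + 5*B1)" by simp
      hence "7*Ka + 18*a*B1 \<le> 4 * (2*Ka + 5*B1)" by (simp add: mult.assoc)
      thus ?thesis using s0 by (simp add: divide_simps)
    qed
    finally show ?thesis .
  qed
  have Dl0: "0 < Dl" using Dp unfolding Dl_def .
  have t3: "\<bar>D'\<bar> / (r * P) \<le> 2 * Kd / sqrt Dl"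
  proof -
    have "\<bar>D'\<bar> / (r * P) \<le> (Kd * sqrt Dl) / (Dl / 2)"
      using hD rP Dl0 Kd0 unfolding Dl_def[symmetric] by (intro frac_le) auto
    also have "\<dots> = 2 * Kd / sqrt Dl" using Dl0
      by (simp add: field_simps)
    finally show ?thesis .
  qed
  have "\<bar>((2 + 2*a)*a1 * r^2 - ((6 + 4*a + 6*a^2)*a1 - 18*b*b1) * r + D') / P\<bar> / r
      = \<bar>(2 + 2*a)*a1 * r^2 - ((6 + 4*a + 6*a^2)*a1 - 18*b*b1) * r + D'\<bar> / (r * P)"
    using r0 Pp by (simp add: abs_div field_simps)
  also have "\<dots> \<le> (\<bar>(2 + 2*a)*a1\<bar> * r^2 + \<bar>(6 + 4*a + 6*a^2)*a1 - 18*b*b1\<bar> * r + \<bar>D'\<bar>) / (r * P)"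
    using r0 Pp by (intro divide_right_mono) (auto simp: abs_mult intro!: order_trans[OF abs_triangle_ineq] order_trans[OF abs_triangle_ineq4] add_mono)
  also have "\<dots> = \<bar>(2 + 2*a)*a1\<bar> * r / P + \<bar>(6 + 4*a + 6*a^2)*a1 - 18*b*b1\<bar> / P + \<bar>D'\<bar> / (r * P)"
    using r0 Pp by (simp add: field_simps power2_eq_square)
  also have "\<dots> \<le> A1 / s + (2*Ka + 5*B1) / s + 2 * Kd / sqrt Dl"
    using t1 t2 t3 by linarith
  also have "\<dots> \<le> (A1 + 2*Ka + 5*B1 + 2*Kd) * (1 / s + 1 / sqrt Dl)"
    using A10 Ka0 B10 Kd0 s0 Dl0 by (simp add: field_simps)
  finally show ?thesis unfolding s_def Dl_def .
qed

lemma phi_bound: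
  fixes a b p C C0 X :: real
  assumes a0: "0 < a" and a8: "a \<le> 1/8" and Dp: "0 < 4*a^3 - 27*b^2" and p0: "0 < p" and C00: "0 < C0"
    and C: "0 \<le> C" and hp: "p^2 * a \<le> C0 * (4*a^3 - 27*b^2)"
    and X: "X \<le> C * (1 / sqrt a + 1 / sqrt (4*a^3 - 27*b^2))"
  shows "X \<le> (2 * C * sqrt C0) / (p * sqrt a)"
proof -
  define Dl where "Dl = 4*a^3 - 27*b^2"
  have "C0 * Dl \<le> C0 * (4*a^3)" unfolding Dl_def using C00 by (intro mult_left_mono) auto
  hence "p^2 * a \<le> (4*C0*a^2) * a" using hp unfolding Dl_def[symmetric] by (simp add: power2_eq_square power3_eq_cube algebra_simps)
  hence p2: "p^2 \<le> 4*C0*a^2" using a0 by simp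
  have "a^2 \<le> 1/64" using a0 a8 power_mono[of a "1/8" 2] by (simp add: power2_eq_square)
  hence "4*C0*a^2 \<le> C0" using C00 by simp
  hence "p^2 \<le> C0" using p2 by linarith
  hence pc: "p \<le> sqrt C0" using p0 real_le_rsqrt by blast
  have sa: "0 < sqrt a" using a0 by simp
  have t1: "1 / sqrt a \<le> sqrt C0 / (p * sqrt a)" using pc p0 sa by (simp add: divide_simps)
  have "sqrt (p^2 * a) \<le> sqrt (C0 * Dl)" using hp unfolding Dl_def by simp
  hence "p * sqrt a \<le> sqrt C0 * sqrt Dl" using p0 by (simp add: real_sqrt_mult)
  hence t2: "1 / sqrt Dl \<le> sqrt C0 / (p * sqrt a)" using p0 sa Dp unfolding Dl_def[symmetric]
    by (simp add: divide_simps mult.commute)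
  have "C * (1 / sqrt a + 1 / sqrt Dl) \<le> C * (2 * (sqrt C0 / (p * sqrt a)))"
  proof (rule mult_left_mono)
    show "1 / sqrt a + 1 / sqrt Dl \<le> 2 * (sqrt C0 / (p * sqrt a))" using add_mono[OF t1 t2] by (simp only: mult_2)
  qed (rule C)
  also have "C * (2 * (sqrt C0 / (p * sqrt a))) = (2 * C * sqrt C0) / (p * sqrt a)" by simp
  finally show ?thesis using X unfolding Dl_def by linarith
qed



lemma lam1_eq: "lam1 a b t x = Min {l. Pc (a t x) (b t x) l = 0}"
  unfolding lam1_def eig_iff ..

lemma sb_cont: "smooth_bdd Om f \<Longrightarrow> continuous_on Om (\<lambda>p. f (fst p) (snd p))"
  unfolding smooth_bdd_def by (metis ipd.simps(1))

lemma sb_bound: "smooth_bdd Om f \<Longrightarrow> \<exists>M. \<forall>t x. (t, x) \<in> Om \<longrightarrow> \<bar>ipd ds f t x\<bar> \<le> M"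
  unfolding smooth_bdd_def by blast

lemma sb_deriv: assumes "smooth_bdd Om f" "(t, x) \<in> Om"
  shows "((\<lambda>y. ipd ds f t y) has_real_derivative ipd (False # ds) f t x) (at x)"
proof -
  have "(\<lambda>y. ipd ds f t y) differentiable (at x)" using assms unfolding smooth_bdd_def by blast
  hence "DERIV (\<lambda>y. ipd ds f t y) x :> deriv (\<lambda>y. ipd ds f t y) x"
    by (simp add: DERIV_deriv_iff_real_differentiable)
  thus ?thesis by simp
qed

lemma DiscD:
  assumes "(A has_real_derivative A') (at y)" "(B has_real_derivative B') (at y)"
  shows "((\<lambda>y. 4*(A y)^3 - 27*(B y)^2) has_real_derivative 12*(A y)^2*A' - 54*B y*B') (at y)"
  using assms by (auto intro!: derivative_eq_intros simp: algebra_simps power2_eq_square)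

lemma DiscD2:
  assumes "(A has_real_derivative A1 y) (at y)" "(B has_real_derivative B1 y) (at y)"
    "(A1 has_real_derivative A2) (at y)" "(B1 has_real_derivative B2) (at y)"
  shows "((\<lambda>y. 12*(A y)^2*A1 y - 54*B y*B1 y) has_real_derivative
     24*A y*(A1 y)^2 + 12*(A y)^2*A2 - 54*(B1 y)^2 - 54*B y*B2) (at y)"
  using assms by (auto intro!: derivative_eq_intros simp: algebra_simps power2_eq_square)

lemma tauD:
  assumes "(A has_real_derivative A') (at y)"
  shows "((\<lambda>y. 3 + 2*A y + (A y)^2) has_real_derivative (2 + 2*A y)*A') (at y)"
  using assms by (auto intro!: derivative_eq_intros simp: algebra_simps power2_eq_square)

lemma mD:
  assumes "(A has_real_derivative A') (at y)" "(B has_real_derivative B') (at y)"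
  shows "((\<lambda>y. 6*A y + 2*(A y)^2 + 2*(A y)^3 - 9*(B y)^2) has_real_derivative
     (6 + 4*A y + 6*(A y)^2)*A' - 18*B y*B') (at y)"
  using assms by (auto intro!: derivative_eq_intros simp: algebra_simps power2_eq_square)

lemma fpp_bound:
  fixes a a1 a2 b b1 b2 A0 A1 A2 B0 B1 B2 :: real
  assumes "\<bar>a\<bar> \<le> A0" "\<bar>a1\<bar> \<le> A1" "\<bar>a2\<bar> \<le> A2" "\<bar>b\<bar> \<le> B0" "\<bar>b1\<bar> \<le> B1" "\<bar>b2\<bar> \<le> B2"
  shows "\<bar>24*a*(a1)^2 + 12*a^2*a2 - 54*(b1)^2 - 54*b*b2\<bar> \<le> 24*A0*A1^2 + 12*A0^2*A2 + 54*B1^2 + 54*B0*B2"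
proof -
  have "\<bar>24*a*(a1)^2 + 12*a^2*a2 - 54*(b1)^2 - 54*b*b2\<bar> \<le> 24*(\<bar>a\<bar>*\<bar>a1\<bar>^2) + 12*(\<bar>a\<bar>^2*\<bar>a2\<bar>) + 54*\<bar>b1\<bar>^2 + 54*(\<bar>b\<bar>*\<bar>b2\<bar>)"
  proof -
    have tri: "\<And>w x y z::real. \<bar>w + x - y - z\<bar> \<le> \<bar>w\<bar> + \<bar>x\<bar> + \<bar>y\<bar> + \<bar>z\<bar>" by arith
    show ?thesis using tri[of "24*a*(a1)^2" "12*a^2*a2" "54*(b1)^2" "54*b*b2"]
      by (simp add: abs_mult power_abs)
  qed
  also have "\<dots> \<le> 24*(A0*A1^2) + 12*(A0^2*A2) + 54*B1^2 + 54*(B0*B2)"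
    using assms by (intro add_mono mult_left_mono mult_mono power_mono) auto
  finally show ?thesis by simp
qed

lemma ev_at_nhds: "P x \<Longrightarrow> eventually P (at x) \<Longrightarrow> eventually P (nhds x)"
  unfolding eventually_at_filter by (auto elim: eventually_mono)

lemma ev_slice: fixes U :: "(real \<times> real) set" assumes "open U" "(t, x) \<in> U" shows "eventually (\<lambda>y. (t, y) \<in> U) (nhds x)"
proof -
  obtain e where e: "e > 0" "ball (t, x) e \<subseteq> U" using assms open_contains_ball by blast
  show ?thesis unfolding eventually_nhds_metric
    using e by (intro exI[of _ e]) (auto simp: dist_Pair_Pair dist_commute subset_iff)
qed



theorem lemma3p3:
  fixes a b :: "real \<Rightarrow> real \<Rightarrow> real" and W :: "real set" and c T :: real
  assumes "open W" and "is_interval W" and "0 \<in> W"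
    and "c > 0" and "T > 0"
    and "smooth_bdd ({-c<..<T} \<times> W) a"
    and "smooth_bdd ({-c<..<T} \<times> W) b"
    and "\<And>t x. t \<in> {0..<T} \<Longrightarrow> x \<in> W \<Longrightarrow> Disc a b t x \<ge> 0"
    and "a 0 0 = 0"
    and "\<And>t x. t \<in> {0<..<T} \<Longrightarrow> x \<in> W \<Longrightarrow> a t x > 0"
  shows "\<exists>U C. open U \<and> (0, 0) \<in> U \<and> U \<subseteq> {-c<..<T} \<times> W \<and> C > 0
    \<and> (\<forall>t x. (t, x) \<in> U \<and> t > 0 \<and> Disc a b t x > 0 \<longrightarrow>
          (\<lambda>y. lam1 a b t y) differentiable (at x)
        \<and> \<bar>deriv (\<lambda>y. lam1 a b t y) x\<bar> / lam1 a b t x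
            \<le> C * (1 / sqrt (a t x) + 1 / sqrt (Disc a b t x)))
    \<and> (\<forall>(\<omega> :: (real \<times> real) set) (\<phi> :: real \<Rightarrow> real \<Rightarrow> real) C0.
         \<omega> \<subseteq> U \<inter> {p. fst p > 0}
       \<and> (\<forall>t x. (t, x) \<in> \<omega> \<longrightarrow> \<phi> t x > 0)
       \<and> C0 > 0
       \<and> (\<forall>t x. (t, x) \<in> \<omega> \<longrightarrow> (\<phi> t x)\<^sup>2 * a t x \<le> C0 * Disc a b t x)
       \<longrightarrow> (\<exists>C'. C' > 0 \<and> (\<forall>t x. (t, x) \<in> \<omega> \<and> Disc a b t x > 0 \<longrightarrow>
              \<bar>deriv (\<lambda>y. lam1 a b t y) x\<bar> / lam1 a b t x \<le> C' / (\<phi> t x * sqrt (a t x)))))"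
proof -
  define Om where "Om = {-c<..<T} \<times> W"
  have oOm: "open Om" unfolding Om_def using assms(1) by (intro open_Times) auto
  have sa: "smooth_bdd Om a" and sb: "smooth_bdd Om b" using assms(6,7) unfolding Om_def by auto
  define a1 where "a1 = ipd [False] a"
  define a2 where "a2 = ipd [False, False] a"
  define b1 where "b1 = ipd [False] b"
  define b2 where "b2 = ipd [False, False] b"
  have da: "((\<lambda>y. a t y) has_real_derivative a1 t y) (at y)" if "(t, y) \<in> Om" for t y
    using sb_deriv[OF sa that, of "[]"] unfolding a1_def by simp
  have da1: "((\<lambda>y. a1 t y) has_real_derivative a2 t y) (at y)" if "(t, y) \<in> Om" for t y
    using sb_deriv[OF sa that, of "[False]"] unfolding a1_def a2_def by simp
  have db: "((\<lambda>y. b t y) has_real_derivative b1 t y) (at y)" if "(t, y) \<in> Om" for t y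
    using sb_deriv[OF sb that, of "[]"] unfolding b1_def by simp
  have db1: "((\<lambda>y. b1 t y) has_real_derivative b2 t y) (at y)" if "(t, y) \<in> Om" for t y
    using sb_deriv[OF sb that, of "[False]"] unfolding b1_def b2_def by simp
  obtain A0 where A0: "\<And>t y. (t, y) \<in> Om \<Longrightarrow> \<bar>a t y\<bar> \<le> A0" using sb_bound[OF sa, of "[]"] by auto
  obtain A1 where A1: "\<And>t y. (t, y) \<in> Om \<Longrightarrow> \<bar>a1 t y\<bar> \<le> A1" using sb_bound[OF sa, of "[False]"] unfolding a1_def by auto
  obtain A2 where A2: "\<And>t y. (t, y) \<in> Om \<Longrightarrow> \<bar>a2 t y\<bar> \<le> A2" using sb_bound[OF sa, of "[False, False]"] unfolding a2_def by auto
  obtain B0 where B0: "\<And>t y. (t, y) \<in> Om \<Longrightarrow> \<bar>b t y\<bar> \<le> B0" using sb_bound[OF sb, of "[]"] by auto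
  obtain B1 where B1: "\<And>t y. (t, y) \<in> Om \<Longrightarrow> \<bar>b1 t y\<bar> \<le> B1" using sb_bound[OF sb, of "[False]"] unfolding b1_def by auto
  obtain B2 where B2: "\<And>t y. (t, y) \<in> Om \<Longrightarrow> \<bar>b2 t y\<bar> \<le> B2" using sb_bound[OF sb, of "[False, False]"] unfolding b2_def by auto
  obtain e where e: "e > 0" "ball 0 e \<subseteq> W" using assms(1,3) open_contains_ball by blast
  define \<delta> where "\<delta> = e / 2"
  have d0: "0 < \<delta>" unfolding \<delta>_def using e by simp
  define U where "U = (((\<lambda>p. a (fst p) (snd p)) -` {..<1/8}) \<inter> Om) \<inter> (UNIV \<times> {-\<delta><..<\<delta>})"
  have "open (((\<lambda>p. a (fst p) (snd p)) -` {..<1/8}) \<inter> Om)"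
    using continuous_on_open_vimage[OF oOm, THEN iffD1, OF sb_cont[OF sa]] by auto
  moreover have "open (UNIV \<times> {-\<delta><..<\<delta>})" by (intro open_Times) auto
  ultimately have oU: "open U" unfolding U_def by (rule open_Int)
  have U0: "(0, 0) \<in> U" unfolding U_def Om_def using assms(3,4,5,9) d0 by auto
  have UOm: "U \<subseteq> Om" unfolding U_def by auto
  define Ma where "Ma = \<bar>A2\<bar> + 1"
  define Md where "Md = 24*\<bar>A0\<bar>*A1^2 + 12*A0^2*\<bar>A2\<bar> + 54*B1^2 + 54*\<bar>B0\<bar>*\<bar>B2\<bar> + 1"
  define Ka where "Ka = sqrt (2*Ma) + 2 * sqrt (1/8) / \<delta>"
  define Kd where "Kd = sqrt (2*Md) + 2 * sqrt (1/128) / \<delta>"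
  define C where "C = \<bar>A1\<bar> + 2*Ka + 5*\<bar>B1\<bar> + 2*Kd"
  have Ma0: "0 < Ma" unfolding Ma_def by simp
  have Md0: "0 < Md" unfolding Md_def by (intro add_nonneg_pos) auto
  have Ka0: "0 < Ka" unfolding Ka_def using Ma0 d0 by (intro add_pos_nonneg) auto
  have Kd0: "0 < Kd" unfolding Kd_def using Md0 d0 by (intro add_pos_nonneg) auto
  have C0: "0 < C" unfolding C_def using Ka0 Kd0 by simp
  have Uprop: "0 < a t x \<and> a t x < 1/8" if "(t, x) \<in> U" "0 < t" for t x
    using that assms(10)[of t x] unfolding U_def Om_def by auto
  have main: "(\<lambda>y. lam1 a b t y) differentiable (at x) \<and>
      \<bar>deriv (\<lambda>y. lam1 a b t y) x\<bar> / lam1 a b t x \<le> C * (1 / sqrt (a t x) + 1 / sqrt (Disc a b t x))"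
    if tx: "(t, x) \<in> U" "0 < t" "0 < Disc a b t x" for t x
  proof -
    have tT: "t < T" "x \<in> W" "\<bar>x\<bar> < \<delta>" "a t x < 1/8" "-c < t" using tx(1) unfolding U_def Om_def by auto
    have ax: "0 < a t x" using assms(10)[of t x] tT tx(2) by auto
    have inW: "y \<in> W" if "x - \<delta> \<le> y" "y \<le> x + \<delta>" for y
    proof -
      have "\<bar>y\<bar> < e" using that tT(3) unfolding \<delta>_def by linarith
      thus ?thesis using e(2) by (auto simp: subset_iff dist_real_def)
    qed
    have inOm: "(t, y) \<in> Om" if "x - \<delta> \<le> y" "y \<le> x + \<delta>" for y
      using inW[OF that] tT unfolding Om_def by auto
    have xOm: "(t, x) \<in> Om" using UOm tx(1) by auto
    have ga: "\<bar>a1 t x\<bar> \<le> Ka * sqrt (a t x)"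
    proof -
      have "\<bar>a1 t x\<bar> \<le> (sqrt (2*Ma) + 2 * sqrt (1/8) / \<delta>) * sqrt (a t x)"
      proof (rule glaeser[of \<delta> Ma x "\<lambda>y. a t y" "\<lambda>y. a1 t y" "\<lambda>y. a2 t y" "1/8"])
        show "0 < \<delta>" by (rule d0)
        show "0 < Ma" by (rule Ma0)
        show "\<forall>y. x - \<delta> \<le> y \<and> y \<le> x + \<delta> \<longrightarrow> 0 \<le> a t y"
          using assms(10) inW tx(2) tT(1) by (auto intro: less_imp_le)
        show "\<forall>y. x - \<delta> \<le> y \<and> y \<le> x + \<delta> \<longrightarrow> ((\<lambda>y. a t y) has_real_derivative a1 t y) (at y)"
          using da inOm by blast
        show "\<forall>y. x - \<delta> \<le> y \<and> y \<le> x + \<delta> \<longrightarrow> ((\<lambda>y. a1 t y) has_real_derivative a2 t y) (at y)"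
          using da1 inOm by blast
        show "\<forall>y. x - \<delta> \<le> y \<and> y \<le> x + \<delta> \<longrightarrow> \<bar>a2 t y\<bar> \<le> Ma"
          using A2 inOm unfolding Ma_def by (metis abs_ge_self add_increasing2 order_trans zero_le_one)
        show "a t x \<le> 1/8" using tT(4) by simp
      qed
      thus ?thesis unfolding Ka_def .
    qed
    have Deq: "\<And>y. Disc a b t y = 4*(a t y)^3 - 27*(b t y)^2" unfolding Disc_def by simp
    have gD: "\<bar>12*(a t x)^2*a1 t x - 54*b t x*b1 t x\<bar> \<le> Kd * sqrt (4*(a t x)^3 - 27*(b t x)^2)"
    proof -
      have "\<bar>12*(a t x)^2*a1 t x - 54*b t x*b1 t x\<bar> \<le> (sqrt (2*Md) + 2 * sqrt (1/128) / \<delta>) * sqrt (4*(a t x)^3 - 27*(b t x)^2)"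
      proof (rule glaeser[of \<delta> Md x "\<lambda>y. 4*(a t y)^3 - 27*(b t y)^2" "\<lambda>y. 12*(a t y)^2*a1 t y - 54*b t y*b1 t y"
            "\<lambda>y. 24*a t y*(a1 t y)^2 + 12*(a t y)^2*a2 t y - 54*(b1 t y)^2 - 54*b t y*b2 t y" "1/128"])
        show "0 < \<delta>" by (rule d0)
        show "0 < Md" by (rule Md0)
        show "\<forall>y. x - \<delta> \<le> y \<and> y \<le> x + \<delta> \<longrightarrow> 0 \<le> 4*(a t y)^3 - 27*(b t y)^2"
          using assms(8) inW tx(2) tT(1) unfolding Disc_def by auto
        show "\<forall>y. x - \<delta> \<le> y \<and> y \<le> x + \<delta> \<longrightarrow> ((\<lambda>y. 4*(a t y)^3 - 27*(b t y)^2) has_real_derivative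
            12*(a t y)^2*a1 t y - 54*b t y*b1 t y) (at y)"
          using DiscD[OF da db] inOm by blast
        show "\<forall>y. x - \<delta> \<le> y \<and> y \<le> x + \<delta> \<longrightarrow> ((\<lambda>y. 12*(a t y)^2*a1 t y - 54*b t y*b1 t y) has_real_derivative
            24*a t y*(a1 t y)^2 + 12*(a t y)^2*a2 t y - 54*(b1 t y)^2 - 54*b t y*b2 t y) (at y)"
        proof (intro allI impI)
          fix y assume "x - \<delta> \<le> y \<and> y \<le> x + \<delta>"
          hence yO: "(t, y) \<in> Om" using inOm by blast
          show "((\<lambda>y. 12*(a t y)^2*a1 t y - 54*b t y*b1 t y) has_real_derivative
            24*a t y*(a1 t y)^2 + 12*(a t y)^2*a2 t y - 54*(b1 t y)^2 - 54*b t y*b2 t y) (at y)"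
            using DiscD2[of "\<lambda>y. a t y" "\<lambda>y. a1 t y" y "\<lambda>y. b t y" "\<lambda>y. b1 t y",
                OF da[OF yO] db[OF yO] da1[OF yO] db1[OF yO]] by simp
        qed
        show "\<forall>y. x - \<delta> \<le> y \<and> y \<le> x + \<delta> \<longrightarrow>
            \<bar>24*a t y*(a1 t y)^2 + 12*(a t y)^2*a2 t y - 54*(b1 t y)^2 - 54*b t y*b2 t y\<bar> \<le> Md"
        proof (intro allI impI)
          fix y assume "x - \<delta> \<le> y \<and> y \<le> x + \<delta>"
          hence yO: "(t, y) \<in> Om" using inOm by blast
          have "\<bar>24*a t y*(a1 t y)^2 + 12*(a t y)^2*a2 t y - 54*(b1 t y)^2 - 54*b t y*b2 t y\<bar>
              \<le> 24*\<bar>A0\<bar>*A1^2 + 12*\<bar>A0\<bar>^2*\<bar>A2\<bar> + 54*B1^2 + 54*\<bar>B0\<bar>*\<bar>B2\<bar>"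
            by (rule fpp_bound) (use A0[OF yO] A1[OF yO] A2[OF yO] B0[OF yO] B1[OF yO] B2[OF yO] in auto)
          thus "\<bar>24*a t y*(a1 t y)^2 + 12*(a t y)^2*a2 t y - 54*(b1 t y)^2 - 54*b t y*b2 t y\<bar> \<le> Md"
            unfolding Md_def by simp
        qed
        have "(a t x)^3 \<le> (1/8)^3" using ax tT(4) by (intro power_mono) auto
        moreover have "(1/8::real)^3 = 1/512" by (simp add: power_divide)
        ultimately have "(a t x)^3 \<le> 1/512" by simp
        thus "4*(a t x)^3 - 27*(b t x)^2 \<le> 1/128" using zero_le_power2[of "b t x"] by linarith
      qed
      thus ?thesis unfolding Kd_def .
    qed
    have dDx: "((\<lambda>y. 4*(a t y)^3 - 27*(b t y)^2) has_real_derivative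
            12*(a t x)^2*a1 t x - 54*b t x*b1 t x) (at x)"
      using DiscD[OF da db] xOm by blast
    have "((\<lambda>y. 4*(a t y)^3 - 27*(b t y)^2) \<longlongrightarrow> 4*(a t x)^3 - 27*(b t x)^2) (at x)"
      using DERIV_isCont[OF dDx] by (simp add: isCont_def)
    moreover have Dx0: "0 < 4*(a t x)^3 - 27*(b t x)^2" using tx(3) unfolding Disc_def .
    ultimately have "eventually (\<lambda>y. 0 < 4*(a t y)^3 - 27*(b t y)^2) (at x)" by (rule order_tendstoD(1))
    with Dx0 have evD: "eventually (\<lambda>y. 0 < 4*(a t y)^3 - 27*(b t y)^2) (nhds x)" by (rule ev_at_nhds)
    have "((\<lambda>y. a t y) \<longlongrightarrow> a t x) (at x)" using DERIV_isCont[OF da[OF xOm]] by (simp add: isCont_def)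
    hence "((\<lambda>y. (a t y)^2) \<longlongrightarrow> (a t x)^2) (at x)" by (intro tendsto_intros)
    moreover have "(a t x)^2 < 3/2 * (a t x)^2" using ax by simp
    ultimately have "eventually (\<lambda>y. (a t y)^2 < 3/2 * (a t x)^2) (at x)" by (rule order_tendstoD(2))
    moreover have "(a t x)^2 < 3/2 * (a t x)^2" using ax by simp
    ultimately have evA: "eventually (\<lambda>y. (a t y)^2 < 3/2 * (a t x)^2) (nhds x)" by (intro ev_at_nhds)
    define r where "r = (\<lambda>y. lam1 a b t y)"
    define tau where "tau = (\<lambda>y. 3 + 2*a t y + (a t y)^2)"
    define m where "m = (\<lambda>y. 6*a t y + 2*(a t y)^2 + 2*(a t y)^3 - 9*(b t y)^2)"
    define D where "D = (\<lambda>y. 4*(a t y)^3 - 27*(b t y)^2)"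
    have ev: "eventually (\<lambda>y. r y ^3 - tau y * r y^2 + m y * r y - D y = 0 \<and> 0 \<le> r y \<and> r y \<le> 2*(a t x)^2) (nhds x)"
      using ev_slice[OF oU tx(1)] evD evA
    proof eventually_elim
      case (elim y)
      have ay: "0 < a t y" "a t y \<le> 1/8" using Uprop[OF elim(1) tx(2)] by auto
      note rp = root_props[OF ay elim(2)]
      have req: "r y = Min {l. Pc (a t y) (b t y) l = 0}" unfolding r_def lam1_eq ..
      have "r y \<le> 4*(a t y)^2/3" using rp(4) req by simp
      also have "\<dots> \<le> 2*(a t x)^2" using elim(3) by simp
      moreover have "Pc (a t y) (b t y) (r y) = 0" "0 < r y" using rp(1,2) req by simp_all
      ultimately show ?case unfolding Pc_def tau_def m_def D_def
        by (simp add: algebra_simps)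
    qed
    have bb: "9*(b t x)^2 \<le> 2*(a t x)^3" using b2_le[OF ax] tx(3) unfolding Disc_def by blast
    have a2x: "(a t x)^2 \<le> a t x / 8" using a2_le[OF ax] tT(4) by simp
    have taux: "tau x \<le> 4" "0 \<le> tau x" unfolding tau_def using ax tT(4) a2x by auto
    have "tau x * (2*(a t x)^2) \<le> 4 * (2*(a t x)^2)" using taux by (intro mult_right_mono) auto
    moreover have "6*(a t x) \<le> m x" unfolding m_def using bb zero_le_power2[of "a t x"] by linarith
    ultimately have cm: "4 * a t x \<le> m x - 2 * tau x * (2*(a t x)^2)" using a2x by linarith
    have dtau: "(tau has_real_derivative (2 + 2*a t x)*a1 t x) (at x)"
      unfolding tau_def by (rule tauD[OF da[OF xOm]])
    have dm: "(m has_real_derivative (6 + 4*a t x + 6*(a t x)^2)*a1 t x - 18*b t x*b1 t x) (at x)"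
      unfolding m_def by (rule mD[OF da[OF xOm] db[OF xOm]])
    have dD: "(D has_real_derivative 12*(a t x)^2*a1 t x - 54*b t x*b1 t x) (at x)"
      unfolding D_def by (rule dDx)
    have rd: "(r has_real_derivative
       ((2 + 2*a t x)*a1 t x * r x^2 - ((6 + 4*a t x + 6*(a t x)^2)*a1 t x - 18*b t x*b1 t x) * r x
         + (12*(a t x)^2*a1 t x - 54*b t x*b1 t x)) / (3 * r x^2 - 2 * tau x * r x + m x)) (at x)"
      by (rule root_deriv[OF ev _ cm taux(2) dtau dm dD]) (use ax in simp)
    have ax8: "a t x \<le> 1/8" using tT(4) by simp
    have Dpx: "0 < 4*(a t x)^3 - 27*(b t x)^2" using tx(3) unfolding Disc_def .
    note rp = root_props[OF ax ax8 Dpx]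
    have req: "r x = Min {l. Pc (a t x) (b t x) l = 0}" unfolding r_def lam1_eq ..
    have P: "3 * r x^2 - 2 * tau x * r x + m x = 3*(r x)^2 - 2*(3+2*a t x+(a t x)^2)*r x + (6*a t x+2*(a t x)^2+2*(a t x)^3-9*(b t x)^2)"
      unfolding tau_def m_def by simp
    have fb: "\<bar>((2 + 2*a t x)*a1 t x * r x^2 - ((6 + 4*a t x + 6*(a t x)^2)*a1 t x - 18*b t x*b1 t x) * r x
         + (12*(a t x)^2*a1 t x - 54*b t x*b1 t x)) / (3 * r x^2 - 2 * tau x * r x + m x)\<bar> / r x
       \<le> (\<bar>A1\<bar> + 2*Ka + 5*\<bar>B1\<bar> + 2*Kd) * (1 / sqrt (a t x) + 1 / sqrt (4*(a t x)^3 - 27*(b t x)^2))"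
      unfolding P
    proof (rule final_bound[OF ax ax8 Dpx])
      show "0 < r x" using rp(2) req by simp
      show "r x \<le> 4*(a t x)^2/3" using rp(4) req by simp
      show "4 * a t x \<le> 3*(r x)^2 - 2*(3+2*a t x+(a t x)^2)*r x + (6*a t x+2*(a t x)^2+2*(a t x)^3-9*(b t x)^2)"
        using rp(6) req by simp
      show "(4*(a t x)^3 - 27*(b t x)^2)/2 \<le> r x * (3*(r x)^2 - 2*(3+2*a t x+(a t x)^2)*r x + (6*a t x+2*(a t x)^2+2*(a t x)^3-9*(b t x)^2))"
        using rp(7) req by simp
      show "\<bar>a1 t x\<bar> \<le> Ka * sqrt (a t x)" by (rule ga)
      show "\<bar>a1 t x\<bar> \<le> \<bar>A1\<bar>" using A1[OF xOm] by simp
      show "\<bar>b1 t x\<bar> \<le> \<bar>B1\<bar>" using B1[OF xOm] by simp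
      show "\<bar>12*(a t x)^2*a1 t x - 54*b t x*b1 t x\<bar> \<le> Kd * sqrt (4*(a t x)^3 - 27*(b t x)^2)" by (rule gD)
    qed
    have "(\<lambda>y. lam1 a b t y) differentiable (at x)"
      using rd unfolding r_def real_differentiable_def by blast
    moreover have "deriv (\<lambda>y. lam1 a b t y) x = ((2 + 2*a t x)*a1 t x * r x^2 - ((6 + 4*a t x + 6*(a t x)^2)*a1 t x - 18*b t x*b1 t x) * r x
         + (12*(a t x)^2*a1 t x - 54*b t x*b1 t x)) / (3 * r x^2 - 2 * tau x * r x + m x)"
      using DERIV_imp_deriv[OF rd] unfolding r_def .
    ultimately show ?thesis using fb unfolding C_def r_def Disc_def by simp
  qed
  show ?thesis
  proof (rule exI[of _ U], rule exI[of _ C], intro conjI allI impI)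
    show "open U" by (rule oU)
    show "(0, 0) \<in> U" by (rule U0)
    show "U \<subseteq> {-c<..<T} \<times> W" using UOm unfolding Om_def .
    show "0 < C" by (rule C0)
  next
    fix t x assume "(t, x) \<in> U \<and> t > 0 \<and> Disc a b t x > 0"
    thus "(\<lambda>y. lam1 a b t y) differentiable (at x)" using main by blast
  next
    fix t x assume "(t, x) \<in> U \<and> t > 0 \<and> Disc a b t x > 0"
    thus "\<bar>deriv (\<lambda>y. lam1 a b t y) x\<bar> / lam1 a b t x \<le> C * (1 / sqrt (a t x) + 1 / sqrt (Disc a b t x))"
      using main by blast
  next
    fix \<omega> :: "(real \<times> real) set" and \<phi> :: "real \<Rightarrow> real \<Rightarrow> real" and C0
    assume H: "\<omega> \<subseteq> U \<inter> {p. fst p > 0} \<and> (\<forall>t x. (t, x) \<in> \<omega> \<longrightarrow> \<phi> t x > 0) \<and> C0 > 0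
       \<and> (\<forall>t x. (t, x) \<in> \<omega> \<longrightarrow> (\<phi> t x)\<^sup>2 * a t x \<le> C0 * Disc a b t x)"
    show "\<exists>C'. C' > 0 \<and> (\<forall>t x. (t, x) \<in> \<omega> \<and> Disc a b t x > 0 \<longrightarrow>
              \<bar>deriv (\<lambda>y. lam1 a b t y) x\<bar> / lam1 a b t x \<le> C' / (\<phi> t x * sqrt (a t x)))"
    proof -
      have "\<forall>t x. (t, x) \<in> \<omega> \<and> Disc a b t x > 0 \<longrightarrow>
              \<bar>deriv (\<lambda>y. lam1 a b t y) x\<bar> / lam1 a b t x \<le> 2 * C * sqrt C0 / (\<phi> t x * sqrt (a t x))"
      proof (intro allI impI)
      fix t x assume tx: "(t, x) \<in> \<omega> \<and> Disc a b t x > 0"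
      have tU: "(t, x) \<in> U" "0 < t" using tx H by auto
      have ax: "0 < a t x" "a t x \<le> 1/8" using Uprop[OF tU] by auto
      have Dp: "0 < 4*(a t x)^3 - 27*(b t x)^2" using tx unfolding Disc_def by simp
      have p0: "0 < \<phi> t x" using tx H by blast
      have hp: "(\<phi> t x)^2 * a t x \<le> C0 * (4*(a t x)^3 - 27*(b t x)^2)" using tx H unfolding Disc_def by blast
      have X: "\<bar>deriv (\<lambda>y. lam1 a b t y) x\<bar> / lam1 a b t x \<le> C * (1 / sqrt (a t x) + 1 / sqrt (4*(a t x)^3 - 27*(b t x)^2))"
        using main[OF tU] tx unfolding Disc_def by simp
      show "\<bar>deriv (\<lambda>y. lam1 a b t y) x\<bar> / lam1 a b t x \<le> 2 * C * sqrt C0 / (\<phi> t x * sqrt (a t x))"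
        using phi_bound[OF ax Dp p0 _ _ hp X] H C0 by simp
      qed
      thus ?thesis using H C0 by (intro exI[of _ "2 * C * sqrt C0"]) auto
    qed
  qed
qed

end
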